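(* Let $n\ge7$ and $\mathcal{A}\in\hat{\mathcal{T}}_n$. Then the automorphisms of $\mathcal{A}$ are exactly the linear maps $\varphi$ with $\varphi(e_1)=e_1+\alpha e_n$, $\varphi(e_2)=e_2+\beta e_n$, $\varphi(e_i)=e_i$ for $3\le i\le n$, where $\alpha,\beta\in\mathbb{C}$.
   Context: Over $\mathbb{C}$, basis $e_1,\dots,e_n$, $e_ie_j=\sum_kc_{ij}^ke_k$. For $n\ge3$, $\mathcal{T}'_n$ is the family of anticommutative algebra structures with $c_{ij}^k=0$ whenever $k\le\max\{i,j\}$ and $e_ie_{i+1}=e_{i+2}$ for $1\le i\le n-2$, other constants arbitrary subject to anticommutativity. For $n\ge7$, $\hat{\mathcal{T}}_n$ is the subfamily of $\mathcal{T}'_n$ with $c_{13}^4=c_{14}^5=c_{15}^6=c_{24}^5=c_{25}^6=c_{14}^6=c_{24}^6=c_{13}^6=0$, $c_{35}^6=1$ and $c_{13}^5c_{46}^7\ne0$. *)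

theory Defs
  imports Complex_Main
begin

text \<open>An n-dimensional complex algebra with basis e_1,...,e_n is given by structure
constants c i j k (e_i e_j = sum_k c i j k e_k), indices ranging over {1..n}.\<close>

definition vecs :: "nat \<Rightarrow> (nat \<Rightarrow> complex) set" where
  "vecs n = {v. \<forall>i. i \<notin> {1..n} \<longrightarrow> v i = 0}"

definition basis_vec :: "nat \<Rightarrow> nat \<Rightarrow> complex" where
  "basis_vec i = (\<lambda>k. if k = i then 1 else 0)"

definition alg_mult :: "nat \<Rightarrow> (nat \<Rightarrow> nat \<Rightarrow> nat \<Rightarrow> complex)
    \<Rightarrow> (nat \<Rightarrow> complex) \<Rightarrow> (nat \<Rightarrow> complex) \<Rightarrow> (nat \<Rightarrow> complex)" where
  "alg_mult n c x y = (\<lambda>k. if k \<in> {1..n}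
      then (\<Sum>i\<in>{1..n}. \<Sum>j\<in>{1..n}. x i * y j * c i j k) else 0)"

text \<open>The linear map with matrix M: phi(e_j) = sum_i M i j e_i.\<close>
definition lin_map :: "nat \<Rightarrow> (nat \<Rightarrow> nat \<Rightarrow> complex)
    \<Rightarrow> (nat \<Rightarrow> complex) \<Rightarrow> (nat \<Rightarrow> complex)" where
  "lin_map n M x = (\<lambda>i. if i \<in> {1..n} then (\<Sum>j\<in>{1..n}. M i j * x j) else 0)"

definition is_automorphism :: "nat \<Rightarrow> (nat \<Rightarrow> nat \<Rightarrow> nat \<Rightarrow> complex)
    \<Rightarrow> (nat \<Rightarrow> nat \<Rightarrow> complex) \<Rightarrow> bool" where
  "is_automorphism n c M \<longleftrightarrow>
     bij_betw (lin_map n M) (vecs n) (vecs n) \<and>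
     (\<forall>x\<in>vecs n. \<forall>y\<in>vecs n.
        lin_map n M (alg_mult n c x y) = alg_mult n c (lin_map n M x) (lin_map n M y))"

definition in_T' :: "nat \<Rightarrow> (nat \<Rightarrow> nat \<Rightarrow> nat \<Rightarrow> complex) \<Rightarrow> bool" where
  "in_T' n c \<longleftrightarrow> 3 \<le> n \<and>
     (\<forall>i\<in>{1..n}. \<forall>j\<in>{1..n}. \<forall>k\<in>{1..n}. c i j k = - c j i k) \<and>
     (\<forall>i\<in>{1..n}. \<forall>j\<in>{1..n}. \<forall>k\<in>{1..n}. k \<le> max i j \<longrightarrow> c i j k = 0) \<and>
     (\<forall>i. 1 \<le> i \<and> i \<le> n - 2 \<longrightarrow>
        (\<forall>k\<in>{1..n}. c i (i+1) k = (if k = i + 2 then 1 else 0)))"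

definition in_T_hat :: "nat \<Rightarrow> (nat \<Rightarrow> nat \<Rightarrow> nat \<Rightarrow> complex) \<Rightarrow> bool" where
  "in_T_hat n c \<longleftrightarrow> 7 \<le> n \<and> in_T' n c \<and>
     c 1 3 4 = 0 \<and> c 1 4 5 = 0 \<and> c 1 5 6 = 0 \<and> c 2 4 5 = 0 \<and> c 2 5 6 = 0 \<and>
     c 1 4 6 = 0 \<and> c 2 4 6 = 0 \<and> c 1 3 6 = 0 \<and> c 3 5 6 = 1 \<and>
     c 1 3 5 * c 4 6 7 \<noteq> 0"

end

theory Submission
  imports Defs
begin

lemma sum_single:
  assumes "finite S" "a \<in> S" "\<And>x. x \<in> S \<Longrightarrow> x \<noteq> a \<Longrightarrow> f x = 0"
  shows "sum f S = (f a :: complex)"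
proof -
  have "sum f S = f a + sum f (S - {a})" using assms by (simp add: sum.remove)
  also have "sum f (S - {a}) = 0" using assms by (intro sum.neutral) auto
  finally show ?thesis by simp
qed

lemma sum_two:
  assumes "finite S" "a \<in> S" "b \<in> S" "a \<noteq> b"
    "\<And>x. x \<in> S \<Longrightarrow> x \<noteq> a \<Longrightarrow> x \<noteq> b \<Longrightarrow> f x = 0"
  shows "sum f S = (f a + f b :: complex)"
proof -
  have "sum f S = f a + sum f (S - {a})" using assms by (simp add: sum.remove)
  also have "sum f (S - {a}) = f b" using assms by (intro sum_single) auto
  finally show ?thesis .
qed

locale algs =
  fixes n :: nat and c :: "nat \<Rightarrow> nat \<Rightarrow> nat \<Rightarrow> complex" and M :: "nat \<Rightarrow> nat \<Rightarrow> complex"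
  assumes n7: "7 \<le> n"
  and anti: "\<And>i j k. i\<in>{1..n} \<Longrightarrow> j\<in>{1..n} \<Longrightarrow> k\<in>{1..n} \<Longrightarrow> c i j k = - c j i k"
  and low: "\<And>i j k. i\<in>{1..n} \<Longrightarrow> j\<in>{1..n} \<Longrightarrow> k\<in>{1..n} \<Longrightarrow> k \<le> max i j \<Longrightarrow> c i j k = 0"
  and chain: "\<And>i k. 1 \<le> i \<Longrightarrow> i \<le> n-2 \<Longrightarrow> k\<in>{1..n} \<Longrightarrow> c i (i+1) k = (if k = i+2 then 1 else 0)"
  and E: "\<And>i j t. i\<in>{1..n} \<Longrightarrow> j\<in>{1..n} \<Longrightarrow> t\<in>{1..n} \<Longrightarrow>
     (\<Sum>k\<in>{1..n}. M t k * c i j k) = (\<Sum>p\<in>{1..n}. \<Sum>q\<in>{1..n}. M p i * M q j * c p q t)"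
begin

lemma cdiag: "i\<in>{1..n} \<Longrightarrow> k\<in>{1..n} \<Longrightarrow> c i i k = 0"
  using anti[of i i k] by simp

lemma Ered:
  assumes "i\<in>{1..n}" "j\<in>{1..n}" "t\<in>{1..n}"
  shows "(\<Sum>k\<in>{1..n}. M t k * c i j k) = (\<Sum>p\<in>{1..<t}. \<Sum>q\<in>{1..<t}. M p i * M q j * c p q t)"
proof -
  have "(\<Sum>p\<in>{1..n}. \<Sum>q\<in>{1..n}. M p i * M q j * c p q t) = (\<Sum>p\<in>{1..<t}. \<Sum>q\<in>{1..n}. M p i * M q j * c p q t)"
    using assms by (intro sum.mono_neutral_right) (auto intro!: sum.neutral simp: low)
  also have "\<dots> = (\<Sum>p\<in>{1..<t}. \<Sum>q\<in>{1..<t}. M p i * M q j * c p q t)"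
    using assms by (intro sum.cong refl sum.mono_neutral_right) (auto simp: low)
  finally show ?thesis using E[OF assms] by simp
qed

lemma chainL:
  assumes "1 \<le> i" "i \<le> n-2" "t\<in>{1..n}"
  shows "(\<Sum>k\<in>{1..n}. M t k * c i (i+1) k) = M t (i+2)"
proof -
  have "(\<Sum>k\<in>{1..n}. M t k * c i (i+1) k) = (\<Sum>k\<in>{1..n}. if k = i+2 then M t k else 0)"
    using assms chain[OF assms(1,2)] by (intro sum.cong refl) auto
  also have "\<dots> = M t (i+2)"
  proof -
    have "i+2 \<in> {1..n}" using assms n7 by auto
    thus ?thesis by simp
  qed
  finally show ?thesis .
qed

lemma T: "j\<in>{1..n} \<Longrightarrow> 3 \<le> j \<Longrightarrow> t\<in>{1..n} \<Longrightarrow> t < j \<Longrightarrow> M t j = 0"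
proof (induction j arbitrary: t rule: less_induct)
  case (less j)
  have eq: "M t j = (\<Sum>p\<in>{1..<t}. \<Sum>q\<in>{1..<t}. M p (j-2) * M q (j-1) * c p q t)"
  proof -
    have h1: "j-2+1 = j-1" "j-2+2 = j" using less.prems by auto
    have "M t j = (\<Sum>k\<in>{1..n}. M t k * c (j-2) (j-1) k)"
      using chainL[of "j-2" t] less.prems unfolding h1 by auto
    also have "\<dots> = (\<Sum>p\<in>{1..<t}. \<Sum>q\<in>{1..<t}. M p (j-2) * M q (j-1) * c p q t)"
    proof -
      have p: "j-2 \<in> {1..n}" "j-1 \<in> {1..n}" "t \<in> {1..n}" using less.prems by auto
      show ?thesis using Ered[OF p] .
    qed
    finally show ?thesis .
  qed
  show ?case
  proof (cases "j = 3")
    case True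
    have "M p (j-2) * M q (j-1) * c p q t = 0" if "p\<in>{1..<t}" "q\<in>{1..<t}" for p q
    proof -
      have "p = 1" "q = 1" using that less.prems True by auto
      thus ?thesis using cdiag[of 1 t] less.prems by simp
    qed
    thus ?thesis using eq by (auto intro!: sum.neutral)
  next
    case False
    have "M q (j-1) = 0" if "q\<in>{1..<t}" for q
      using less.IH[of "j-1" q] that less.prems False by auto
    thus ?thesis using eq by (auto intro!: sum.neutral)
  qed
qed

lemma diagrec:
  assumes "3 \<le> k" "k+2 \<le> n"
  shows "M (k+2) (k+2) = M k k * M (k+1) (k+1)"
proof -
  have p: "k\<in>{1..n}" "k+1\<in>{1..n}" "k+2\<in>{1..n}" using assms by auto
  have "M (k+2) (k+2) = (\<Sum>k'\<in>{1..n}. M (k+2) k' * c k (k+1) k')"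
    using chainL[of k "k+2"] assms by auto
  also have "\<dots> = (\<Sum>p\<in>{1..<k+2}. \<Sum>q\<in>{1..<k+2}. M p k * M q (k+1) * c p q (k+2))"
    using Ered[OF p] .
  also have "\<dots> = (\<Sum>p\<in>{1..<k+2}. M p k * M (k+1) (k+1) * c p (k+1) (k+2))"
  proof (intro sum.cong refl sum_single)
    fix p q assume "q \<in> {1..<k+2}" "q \<noteq> k+1"
    hence "M q (k+1) = 0" using T[of "k+1" q] assms by auto
    thus "M p k * M q (k+1) * c p q (k+2) = 0" by simp
  qed auto
  also have "\<dots> = M k k * M (k+1) (k+1) * c k (k+1) (k+2)"
  proof (rule sum_single)
    fix p assume a: "p \<in> {1..<k+2}" "p \<noteq> k"
    show "M p k * M (k+1) (k+1) * c p (k+1) (k+2) = 0"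
    proof (cases "p < k")
      case True thus ?thesis using T[of k p] assms a by auto
    next
      case False hence "p = k+1" using a by auto
      thus ?thesis using cdiag[of "k+1" "k+2"] p by simp
    qed
  qed (use assms in auto)
  also have "c k (k+1) (k+2) = 1" using chain[of k "k+2"] assms by auto
  finally show ?thesis by simp
qed

lemma Ecn:
  assumes "i\<in>{1..n}" "j\<in>{1..n}" "t\<in>{1..n}" "2 \<le> t"
  shows "(\<Sum>k\<in>{1..t}. M t k * c i j k) = (\<Sum>p\<in>{1..<t}. \<Sum>q\<in>{1..<t}. M p i * M q j * c p q t)"
proof -
  have "(\<Sum>k\<in>{1..n}. M t k * c i j k) = (\<Sum>k\<in>{1..t}. M t k * c i j k)"
    using assms by (intro sum.mono_neutral_right) (auto simp: T)
  thus ?thesis using Ered[OF assms(1-3)] by simp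
qed

lemma dnz:
  assumes dn: "M n n \<noteq> 0"
  shows "3 \<le> k \<Longrightarrow> k \<le> n \<Longrightarrow> M k k \<noteq> 0"
proof (induction "n - k" arbitrary: k rule: less_induct)
  case less
  show ?case
  proof (cases "k + 2 \<le> n")
    case True
    have "M (k+2) (k+2) \<noteq> 0" using less.hyps[of "k+2"] less.prems True by auto
    thus ?thesis using diagrec[of k] less.prems True by auto
  next
    case False
    show ?thesis
    proof (cases "k = n")
      case True thus ?thesis using dn by simp
    next
      case False
      hence k: "k = (n-2)+1" using \<open>\<not> k+2 \<le> n\<close> less.prems by auto
      have q: "n-2+2 = n" "n-2+1 = k" using n7 k by auto
      have "M n n = M (n-2) (n-2) * M k k" using diagrec[of "n-2"] n7 unfolding q by auto
      thus ?thesis using dn by auto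
    qed
  qed
qed

lemma stepA:
  assumes dn: "M n n \<noteq> 0"
  and h: "c 1 3 4 = 0" "c 1 4 5 = 0" "c 1 5 6 = 0" "c 2 4 5 = 0" "c 2 5 6 = 0"
     "c 1 4 6 = 0" "c 2 4 6 = 0" "c 1 3 6 = 0" "c 3 5 6 = 1" "c 1 3 5 \<noteq> 0" "c 4 6 7 \<noteq> 0"
  shows "M 1 1 = 1 \<and> M 2 1 = 0 \<and> M 1 2 = 0 \<and> M 2 2 = 1 \<and> M 3 3 = 1 \<and> M 4 4 = 1"
proof -
  have cz: "c p q t = 0" if "1 \<le> p" "p \<le> 7" "1 \<le> q" "q \<le> 7" "1 \<le> t" "t \<le> 7" "t \<le> max p q" for p q t
    using n7 that by (intro low) auto
  have cd: "c p p t = 0" if "1 \<le> p" "p \<le> 7" "1 \<le> t" "t \<le> 7" for p t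
    using n7 that by (intro cdiag) auto
  have ca: "c p q t = - c q p t" if "1 \<le> q" "q < p" "p \<le> 7" "1 \<le> t" "t \<le> 7" for p q t
    using n7 that by (intro anti) auto
  have ch1: "c 1 2 k = (if k = 3 then 1 else 0)" if "1 \<le> k" "k \<le> 7" for k
  proof -
    have "c 1 (1+1) k = (if k = 1+2 then 1 else 0)" using n7 that by (intro chain) auto
    thus ?thesis by (simp add: eval_nat_numeral)
  qed
  have ch2: "c 2 3 k = (if k = 4 then 1 else 0)" if "1 \<le> k" "k \<le> 7" for k
  proof -
    have "c 2 (2+1) k = (if k = 2+2 then 1 else 0)" using n7 that by (intro chain) auto
    thus ?thesis by (simp add: eval_nat_numeral)
  qed
  have ch3: "c 3 4 k = (if k = 5 then 1 else 0)" if "1 \<le> k" "k \<le> 7" for k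
  proof -
    have "c 3 (3+1) k = (if k = 3+2 then 1 else 0)" using n7 that by (intro chain) auto
    thus ?thesis by (simp add: eval_nat_numeral)
  qed
  have ch4: "c 4 5 k = (if k = 6 then 1 else 0)" if "1 \<le> k" "k \<le> 7" for k
  proof -
    have "c 4 (4+1) k = (if k = 4+2 then 1 else 0)" using n7 that by (intro chain) auto
    thus ?thesis by (simp add: eval_nat_numeral)
  qed
  have ch5: "c 5 6 k = (if k = 7 then 1 else 0)" if "1 \<le> k" "k \<le> 7" for k
  proof -
    have "c 5 (5+1) k = (if k = 5+2 then 1 else 0)" using n7 that by (intro chain) auto
    thus ?thesis by (simp add: eval_nat_numeral)
  qed
  have Mz: "M p j = 0" if "3 \<le> j" "j \<le> 7" "1 \<le> p" "p < j" for p j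
    using n7 that by (intro T) auto
  have dz: "M k k \<noteq> 0" if "3 \<le> k" "k \<le> 7" for k
    using n7 that by (intro dnz[OF dn]) auto
  have s: "{1..<3::nat} = {1,2}" "{1..<4::nat} = {1,2,3}" "{1..<5::nat} = {1,2,3,4}"
    "{1..<6::nat} = {1,2,3,4,5}" "{1..<7::nat} = {1,2,3,4,5,6}"
    "{1..3::nat} = {1,2,3}" "{1..4::nat} = {1,2,3,4}" "{1..5::nat} = {1,2,3,4,5}"
    "{1..6::nat} = {1,2,3,4,5,6}" "{1..7::nat} = {1,2,3,4,5,6,7}" by auto
  note S = s cz cd ca ch1 ch2 ch3 ch4 ch5 Mz h
  have d3: "M 3 3 \<noteq> 0" by (rule dz) auto
  have d4: "M 4 4 \<noteq> 0" by (rule dz) auto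
  have d5: "M 5 5 \<noteq> 0" by (rule dz) auto
  have d6: "M 6 6 \<noteq> 0" by (rule dz) auto
  have d7: "M 7 7 \<noteq> 0" by (rule dz) auto
  have "(\<Sum>k\<in>{1..3}. M 3 k * c 1 2 k) = (\<Sum>p\<in>{1..<3}. \<Sum>q\<in>{1..<3}. M p 1 * M q 2 * c p q 3)"
    by (rule Ecn) (use n7 in auto)
  then have e1: "M 3 3 = M 1 1 * M 2 2 - M 2 1 * M 1 2"
    by (simp add: S  del: One_nat_def)
  have "(\<Sum>k\<in>{1..4}. M 4 k * c 2 3 k) = (\<Sum>p\<in>{1..<4}. \<Sum>q\<in>{1..<4}. M p 2 * M q 3 * c p q 4)"
    by (rule Ecn) (use n7 in auto)
  then have e2: "M 4 4 = M 2 2 * M 3 3"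
    by (simp add: S  del: One_nat_def)
  have "(\<Sum>k\<in>{1..4}. M 4 k * c 1 3 k) = (\<Sum>p\<in>{1..<4}. \<Sum>q\<in>{1..<4}. M p 1 * M q 3 * c p q 4)"
    by (rule Ecn) (use n7 in auto)
  then have b0: "M 2 1 = 0"
    by (simp add: S d3 del: One_nat_def)
  have "(\<Sum>k\<in>{1..5}. M 5 k * c 1 4 k) = (\<Sum>p\<in>{1..<5}. \<Sum>q\<in>{1..<5}. M p 1 * M q 4 * c p q 5)"
    by (rule Ecn) (use n7 in auto)
  then have m31: "M 3 1 = 0"
    by (simp add: S d4 b0 del: One_nat_def)
  have "(\<Sum>k\<in>{1..5}. M 5 k * c 2 4 k) = (\<Sum>p\<in>{1..<5}. \<Sum>q\<in>{1..<5}. M p 2 * M q 4 * c p q 5)"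
    by (rule Ecn) (use n7 in auto)
  then have m32: "M 3 2 = 0"
    by (simp add: S d4 del: One_nat_def)
  have "(\<Sum>k\<in>{1..6}. M 6 k * c 1 5 k) = (\<Sum>p\<in>{1..<6}. \<Sum>q\<in>{1..<6}. M p 1 * M q 5 * c p q 6)"
    by (rule Ecn) (use n7 in auto)
  then have m41: "M 4 1 = 0"
    by (simp add: S d5 b0 m31 del: One_nat_def)
  have "(\<Sum>k\<in>{1..6}. M 6 k * c 2 5 k) = (\<Sum>p\<in>{1..<6}. \<Sum>q\<in>{1..<6}. M p 2 * M q 5 * c p q 6)"
    by (rule Ecn) (use n7 in auto)
  then have m42: "M 4 2 = 0"
    by (simp add: S d5 m32 del: One_nat_def)
  have "(\<Sum>k\<in>{1..6}. M 6 k * c 1 4 k) = (\<Sum>p\<in>{1..<6}. \<Sum>q\<in>{1..<6}. M p 1 * M q 4 * c p q 6)"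
    by (rule Ecn) (use n7 in auto)
  then have m51: "M 5 1 = 0"
    by (simp add: S d4 b0 m31 m41 del: One_nat_def)
  have "(\<Sum>k\<in>{1..6}. M 6 k * c 2 4 k) = (\<Sum>p\<in>{1..<6}. \<Sum>q\<in>{1..<6}. M p 2 * M q 4 * c p q 6)"
    by (rule Ecn) (use n7 in auto)
  then have m52: "M 5 2 = 0"
    by (simp add: S d4 m32 m42 del: One_nat_def)
  have "(\<Sum>k\<in>{1..5}. M 5 k * c 1 3 k) = (\<Sum>p\<in>{1..<5}. \<Sum>q\<in>{1..<5}. M p 1 * M q 3 * c p q 5)"
    by (rule Ecn) (use n7 in auto)
  then have e5: "M 5 5 = M 1 1 * M 3 3"
    by (simp add: S b0 m31 m41 del: One_nat_def)
  have "(\<Sum>k\<in>{1..4}. M 4 k * c 1 2 k) = (\<Sum>p\<in>{1..<4}. \<Sum>q\<in>{1..<4}. M p 1 * M q 2 * c p q 4)"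
    by (rule Ecn) (use n7 in auto)
  then have m43: "M 4 3 = 0"
    by (simp add: S b0 m31 m32 del: One_nat_def)
  have "(\<Sum>k\<in>{1..6}. M 6 k * c 3 5 k) = (\<Sum>p\<in>{1..<6}. \<Sum>q\<in>{1..<6}. M p 3 * M q 5 * c p q 6)"
    by (rule Ecn) (use n7 in auto)
  then have e6: "M 6 6 = M 5 5 * M 3 3"
    by (simp add: S m43 del: One_nat_def)
  have "(\<Sum>k\<in>{1..5}. M 5 k * c 1 2 k) = (\<Sum>p\<in>{1..<5}. \<Sum>q\<in>{1..<5}. M p 1 * M q 2 * c p q 5)"
    by (rule Ecn) (use n7 in auto)
  then have m53: "M 5 3 = 0"
    by (simp add: S b0 m31 m32 m41 m42 del: One_nat_def)
  have "(\<Sum>k\<in>{1..5}. M 5 k * c 2 3 k) = (\<Sum>p\<in>{1..<5}. \<Sum>q\<in>{1..<5}. M p 2 * M q 3 * c p q 5)"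
    by (rule Ecn) (use n7 in auto)
  then have m54: "M 5 4 = M 1 2 * M 3 3 * c 1 3 5"
    by (simp add: S m32 m42 m43 del: One_nat_def)
  have "(\<Sum>k\<in>{1..6}. M 6 k * c 1 3 k) = (\<Sum>p\<in>{1..<6}. \<Sum>q\<in>{1..<6}. M p 1 * M q 3 * c p q 6)"
    by (rule Ecn) (use n7 in auto)
  then have m65: "M 6 5 = 0"
    by (simp add: S b0 m31 m41 m51 m43 del: One_nat_def)
  have "(\<Sum>k\<in>{1..6}. M 6 k * c 3 4 k) = (\<Sum>p\<in>{1..<6}. \<Sum>q\<in>{1..<6}. M p 3 * M q 4 * c p q 6)"
    by (rule Ecn) (use n7 in auto)
  then have e7: "M 3 3 * M 5 4 = M 4 4 * M 5 3"
    by (simp add: S m65 m43 del: One_nat_def)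
  have "(\<Sum>k\<in>{1..7}. M 7 k * c 4 6 k) = (\<Sum>p\<in>{1..<7}. \<Sum>q\<in>{1..<7}. M p 4 * M q 6 * c p q 7)"
    by (rule Ecn) (use n7 in auto)
  then have e8: "M 7 7 * c 4 6 7 = M 4 4 * M 6 6 * c 4 6 7 + M 5 4 * M 6 6"
    by (simp add: S  del: One_nat_def)
  have r5: "M 5 5 = M 3 3 * M 4 4" using diagrec[of 3] n7 by simp
  have r6: "M 6 6 = M 4 4 * M 5 5" using diagrec[of 4] n7 by simp
  have r7: "M 7 7 = M 5 5 * M 6 6" using diagrec[of 5] n7 by simp
  have A1: "M 3 3 = M 1 1 * M 2 2" using e1 b0 by simp
  have A2: "M 3 3 = M 4 4" using e6 r6 d5 by (simp add: mult.commute)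
  have dd: "M 2 2 = 1" using A2 e2 d3 by simp
  have A3: "M 5 4 = 0" using e7 m53 d3 by simp
  have cc: "M 1 2 = 0" using m54 A3 d3 h(10) by simp
  have A4: "M 7 7 = M 4 4 * M 6 6" using e8 A3 h(11) by simp
  have A5: "M 5 5 = M 4 4" using A4 r7 d6 by simp
  have A6: "M 3 3 = 1" using A5 r5 d4 by simp
  have aa: "M 1 1 = 1" using A6 A1 dd by simp
  show ?thesis using aa b0 cc dd A6 A2 by simp
qed

lemma diag1:
  assumes "M 3 3 = 1" "M 4 4 = 1"
  shows "3 \<le> k \<Longrightarrow> k \<le> n \<Longrightarrow> M k k = 1"
proof (induction k rule: less_induct)
  case (less k)
  show ?case
  proof (cases "k \<le> 4")
    case True hence "k = 3 \<or> k = 4" using less.prems by auto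
    thus ?thesis using assms by auto
  next
    case False
    have q: "k-2+2 = k" "k-2+1 = k-1" using False by auto
    have "M k k = M (k-2) (k-2) * M (k-1) (k-1)"
      using diagrec[of "k-2"] False less.prems unfolding q by auto
    thus ?thesis using less.IH[of "k-2"] less.IH[of "k-1"] False less.prems by auto
  qed
qed

lemma propg:
  assumes "1 \<le> a" "a \<le> n-2" "t\<in>{1..n}" "a+1 < t"
    "\<And>p. p\<in>{1..<t} \<Longrightarrow> M p a = (if p = a then 1 else 0)"
    "\<And>p. p\<in>{1..<t} \<Longrightarrow> M p (a+1) = (if p = a+1 then 1 else 0)"
  shows "M t (a+2) = (if t = a+2 then 1 else 0)"
proof -
  have p: "a\<in>{1..n}" "a+1\<in>{1..n}" "t\<in>{1..n}" using assms by auto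
  have "M t (a+2) = (\<Sum>k\<in>{1..n}. M t k * c a (a+1) k)"
    using chainL[of a t] assms by auto
  also have "\<dots> = (\<Sum>p\<in>{1..<t}. \<Sum>q\<in>{1..<t}. M p a * M q (a+1) * c p q t)"
    using Ered[OF p] .
  also have "\<dots> = (\<Sum>p\<in>{1..<t}. \<Sum>q\<in>{1..<t}. if p = a then (if q = a+1 then c a (a+1) t else 0) else 0)"
    using assms(5,6) by (intro sum.cong refl) auto
  also have "\<dots> = (\<Sum>p\<in>{1..<t}. if p = a then c a (a+1) t else 0)"
  proof (intro sum.cong refl)
    fix p assume "p \<in> {1..<t}"
    show "(\<Sum>q\<in>{1..<t}. if p = a then (if q = a+1 then c a (a+1) t else 0) else 0) = (if p = a then c a (a+1) t else 0)"
      using sum_single[where f="\<lambda>q. if p = a then (if q = a+1 then c a (a+1) t else 0) else 0" and a="a+1" and S="{1..<t}"] assms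
      by auto
  qed
  also have "\<dots> = c a (a+1) t" using assms by simp
  also have "\<dots> = (if t = a+2 then 1 else 0)" using chain[of a t] assms by auto
  finally show ?thesis .
qed

definition Hm :: "nat \<Rightarrow> bool" where
  "Hm m \<longleftrightarrow> (\<forall>j p. j \<in> {1,2} \<longrightarrow> p \<in> {1..n} \<longrightarrow> p < m \<longrightarrow> M p j = (if p = j then 1 else 0))"

lemma C:
  assumes H: "Hm m" and dg: "\<And>k. 3 \<le> k \<Longrightarrow> k \<le> n \<Longrightarrow> M k k = 1"
  shows "k \<in> {1..n} \<Longrightarrow> 3 \<le> k \<Longrightarrow> t \<in> {1..n} \<Longrightarrow> t \<le> max m k \<Longrightarrow> M t k = (if t = k then 1 else 0)"
proof (induction k arbitrary: t rule: less_induct)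
  case (less k)
  show ?case
  proof (cases "t \<le> k")
    case True thus ?thesis using T[of k t] dg[of k] less.prems by (cases "t = k") auto
  next
    case False
    hence tm: "k < t" "t \<le> m" using less.prems by auto
    have col: "M p i = (if p = i then 1 else 0)" if "p \<in> {1..<t}" "i \<in> {k-2, k-1}" for p i
    proof (cases "i \<le> 2")
      case True
      hence "i \<in> {1,2}" using that less.prems by auto
      thus ?thesis using H that tm less.prems unfolding Hm_def by auto
    next
      case False
      thus ?thesis using less.IH[of i p] that tm less.prems by auto
    qed
    have q: "k-2+2 = k" "k-2+1 = k-1" using less.prems by auto
    have "M t (k-2+2) = (if t = k-2+2 then 1 else 0)"
    proof (rule propg)
      show "\<And>p. p\<in>{1..<t} \<Longrightarrow> M p (k-2) = (if p = k-2 then 1 else 0)" using col by auto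
      show "\<And>p. p\<in>{1..<t} \<Longrightarrow> M p (k-2+1) = (if p = k-2+1 then 1 else 0)" using col unfolding q by auto
    qed (use less.prems tm in auto)
    thus ?thesis unfolding q .
  qed
qed

lemma stepB:
  assumes H: "Hm m" and dg: "\<And>k. 3 \<le> k \<Longrightarrow> k \<le> n \<Longrightarrow> M k k = 1"
    and m: "3 \<le> m" "m+2 \<le> n" and j: "j \<in> {1,2}"
  shows "M m j = 0"
proof -
  have p: "j\<in>{1..n}" "m+1\<in>{1..n}" "m+2\<in>{1..n}" using m j by auto
  have L: "(\<Sum>k\<in>{1..n}. M (m+2) k * c j (m+1) k) = c j (m+1) (m+2)"
  proof -
    have "(\<Sum>k\<in>{1..n}. M (m+2) k * c j (m+1) k) = M (m+2) (m+2) * c j (m+1) (m+2)"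
    proof (rule sum_single)
      fix k assume k: "k \<in> {1..n}" "k \<noteq> m+2"
      show "M (m+2) k * c j (m+1) k = 0"
      proof (cases "k \<le> m+1")
        case True thus ?thesis using low[of j "m+1" k] k p by auto
      next
        case False thus ?thesis using T[of k "m+2"] k m by auto
      qed
    qed (use p in auto)
    thus ?thesis using dg[of "m+2"] m by simp
  qed
  have colm: "M q (m+1) = (if q = m+1 then 1 else 0)" if "q \<in> {1..<m+2}" for q
    using C[OF H dg, of "m+1" q] that m by auto
  have "(\<Sum>k\<in>{1..n}. M (m+2) k * c j (m+1) k) = (\<Sum>p\<in>{1..<m+2}. \<Sum>q\<in>{1..<m+2}. M p j * M q (m+1) * c p q (m+2))"
    using Ered[OF p] .
  also have "\<dots> = (\<Sum>p\<in>{1..<m+2}. M p j * 1 * c p (m+1) (m+2))"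
  proof (intro sum.cong refl)
    fix p assume "p \<in> {1..<m+2}"
    have "(\<Sum>q\<in>{1..<m+2}. M p j * M q (m+1) * c p q (m+2)) = M p j * M (m+1) (m+1) * c p (m+1) (m+2)"
      by (rule sum_single[where f="\<lambda>q. M p j * M q (m+1) * c p q (m+2)" and a="m+1"]) (use colm in auto)
    thus "(\<Sum>q\<in>{1..<m+2}. M p j * M q (m+1) * c p q (m+2)) = M p j * 1 * c p (m+1) (m+2)"
      using colm[of "m+1"] by simp
  qed
  also have "\<dots> = M j j * 1 * c j (m+1) (m+2) + M m j * 1 * c m (m+1) (m+2)"
  proof (rule sum_two[where f="\<lambda>p. M p j * 1 * c p (m+1) (m+2)" and a=j and b=m])
    fix p assume pp: "p \<in> {1..<m+2}" "p \<noteq> j" "p \<noteq> m"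
    show "M p j * 1 * c p (m+1) (m+2) = 0"
    proof (cases "p < m")
      case True thus ?thesis using H pp j m unfolding Hm_def by auto
    next
      case False hence "p = m+1" using pp by auto
      thus ?thesis using cdiag[of "m+1" "m+2"] p by simp
    qed
  qed (use j m in auto)
  also have "M j j = 1" using H j m unfolding Hm_def by auto
  also have "c m (m+1) (m+2) = 1" using chain[of m "m+2"] m by auto
  finally show ?thesis using L by simp
qed

lemma stepLast:
  assumes H: "Hm (n-1)" and dg: "\<And>k. 3 \<le> k \<Longrightarrow> k \<le> n \<Longrightarrow> M k k = 1"
    and j: "j \<in> {1,2}"
  shows "M (n-1) j = 0"
proof -
  have col: "M q i = (if q = i then 1 else 0)" if "q \<in> {1..<n}" "i \<in> {n-3, n-2}" for q i
    using C[OF H dg, of i q] that n7 by auto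
  have q3: "n-3+2 = n-1" "n-3+1 = n-2" using n7 by auto
  have Mn: "M n (n-1) = 0"
  proof -
    have "M n (n-3+2) = (if n = n-3+2 then 1 else 0)"
    proof (rule propg)
      show "\<And>p. p\<in>{1..<n} \<Longrightarrow> M p (n-3) = (if p = n-3 then 1 else 0)" using col by auto
      show "\<And>p. p\<in>{1..<n} \<Longrightarrow> M p (n-3+1) = (if p = n-3+1 then 1 else 0)" using col unfolding q3 by auto
    qed (use n7 in auto)
    thus ?thesis unfolding q3 using n7 by auto
  qed
  have p: "j\<in>{1..n}" "n-2\<in>{1..n}" "n\<in>{1..n}" using n7 j by auto
  have L: "(\<Sum>k\<in>{1..n}. M n k * c j (n-2) k) = c j (n-2) n"
  proof -
    have "(\<Sum>k\<in>{1..n}. M n k * c j (n-2) k) = M n n * c j (n-2) n"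
    proof (rule sum_single)
      fix k assume k: "k \<in> {1..n}" "k \<noteq> n"
      show "M n k * c j (n-2) k = 0"
      proof (cases "k \<le> n-2")
        case True thus ?thesis using low[of j "n-2" k] k p by auto
      next
        case False hence "k = n-1" using k by auto
        thus ?thesis using Mn by simp
      qed
    qed (use p in auto)
    thus ?thesis using dg[of n] n7 by simp
  qed
  have "(\<Sum>k\<in>{1..n}. M n k * c j (n-2) k) = (\<Sum>p\<in>{1..<n}. \<Sum>q\<in>{1..<n}. M p j * M q (n-2) * c p q n)"
    using Ered[OF p] .
  also have "\<dots> = (\<Sum>p\<in>{1..<n}. M p j * 1 * c p (n-2) n)"
  proof (intro sum.cong refl)
    fix p assume "p \<in> {1..<n}"
    have "(\<Sum>q\<in>{1..<n}. M p j * M q (n-2) * c p q n) = M p j * M (n-2) (n-2) * c p (n-2) n"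
      by (rule sum_single[where f="\<lambda>q. M p j * M q (n-2) * c p q n" and a="n-2"]) (use col n7 in auto)
    thus "(\<Sum>q\<in>{1..<n}. M p j * M q (n-2) * c p q n) = M p j * 1 * c p (n-2) n"
      using col[of "n-2" "n-2"] n7 by simp
  qed
  also have "\<dots> = M j j * 1 * c j (n-2) n + M (n-1) j * 1 * c (n-1) (n-2) n"
  proof (rule sum_two[where f="\<lambda>p. M p j * 1 * c p (n-2) n" and a=j and b="n-1"])
    fix p assume pp: "p \<in> {1..<n}" "p \<noteq> j" "p \<noteq> n-1"
    show "M p j * 1 * c p (n-2) n = 0" using H pp j unfolding Hm_def by auto
  qed (use j n7 in auto)
  also have "M j j = 1" using H j n7 unfolding Hm_def by auto
  also have "c (n-1) (n-2) n = - 1"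
  proof -
    have q: "n-2+1 = n-1" "n-2+2 = n" using n7 by auto
    have "c (n-2) (n-1) n = 1" using chain[of "n-2" n] n7 unfolding q by auto
    moreover have "c (n-1) (n-2) n = - c (n-2) (n-1) n" using anti[of "n-1" "n-2" n] n7 by auto
    ultimately show ?thesis by simp
  qed
  finally show ?thesis using L by simp
qed

lemma Hind:
  assumes dn: "M n n \<noteq> 0"
  and h: "c 1 3 4 = 0" "c 1 4 5 = 0" "c 1 5 6 = 0" "c 2 4 5 = 0" "c 2 5 6 = 0"
     "c 1 4 6 = 0" "c 2 4 6 = 0" "c 1 3 6 = 0" "c 3 5 6 = 1" "c 1 3 5 \<noteq> 0" "c 4 6 7 \<noteq> 0"
  shows "\<forall>i\<in>{1..n}. \<forall>j\<in>{1..n}. M i j = (if i = j then 1 else if i = n \<and> j = 1 then M n 1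
           else if i = n \<and> j = 2 then M n 2 else 0)"
proof -
  have A: "M 1 1 = 1" "M 2 1 = 0" "M 1 2 = 0" "M 2 2 = 1" "M 3 3 = 1" "M 4 4 = 1"
    using stepA[OF dn h] by auto
  have dg: "\<And>k. 3 \<le> k \<Longrightarrow> k \<le> n \<Longrightarrow> M k k = 1" using diag1[OF A(5,6)] by auto
  have H3: "Hm 3"
    unfolding Hm_def
  proof (intro allI impI)
    fix j p assume "j \<in> {1::nat,2}" "p \<in> {1..n}" "p < 3"
    hence "j = 1 \<or> j = 2" "p = 1 \<or> p = 2" by auto
    thus "M p j = (if p = j then 1 else 0)" using A by auto
  qed
  have Hk: "3 \<le> m \<Longrightarrow> m \<le> n-1 \<Longrightarrow> Hm m" for m
  proof (induction m)
    case 0 thus ?case by simp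
  next
    case (Suc m)
    show ?case
    proof (cases "m < 3")
      case True hence "Suc m = 3" using Suc.prems by auto
      thus ?thesis using H3 by simp
    next
      case False
      hence Hm: "Hm m" using Suc by auto
      have z: "M m j = 0" if "j \<in> {1,2}" for j
        using stepB[OF Hm dg _ _ that] False Suc.prems by auto
      show ?thesis unfolding Hm_def
      proof (intro allI impI)
        fix j p assume a: "j \<in> {1::nat,2}" "p \<in> {1..n}" "p < Suc m"
        show "M p j = (if p = j then 1 else 0)"
        proof (cases "p < m")
          case True thus ?thesis using Hm a unfolding Hm_def by auto
        next
          case False hence "p = m" using a by auto
          thus ?thesis using z[OF a(1)] a(1) \<open>\<not> m < 3\<close> by auto
        qed
      qed
    qed
  qed
  have Hn1: "Hm (n-1)" using Hk n7 by auto
  have Hn: "Hm n" unfolding Hm_def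
  proof (intro allI impI)
    fix j p assume a: "j \<in> {1::nat,2}" "p \<in> {1..n}" "p < n"
    show "M p j = (if p = j then 1 else 0)"
    proof (cases "p < n-1")
      case True thus ?thesis using Hn1 a unfolding Hm_def by auto
    next
      case False hence "p = n-1" using a by auto
      thus ?thesis using stepLast[OF Hn1 dg a(1)] a(1) n7 by auto
    qed
  qed
  show ?thesis
  proof (intro ballI)
    fix i j assume ij: "i \<in> {1..n}" "j \<in> {1..n}"
    show "M i j = (if i = j then 1 else if i = n \<and> j = 1 then M n 1
           else if i = n \<and> j = 2 then M n 2 else 0)"
    proof (cases "3 \<le> j")
      case True thus ?thesis using C[OF Hn dg, of j i] ij by auto
    next
      case False
      hence j: "j \<in> {1,2}" using ij by auto
      show ?thesis
      proof (cases "i < n")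
        case True thus ?thesis using Hn j ij unfolding Hm_def by auto
      next
        case False hence "i = n" using ij by auto
        thus ?thesis using j n7 by auto
      qed
    qed
  qed
qed

end

lemma basis_vecs: "i \<in> {1..n} \<Longrightarrow> basis_vec i \<in> vecs n"
  by (auto simp: basis_vec_def vecs_def)

lemma lin_basis:
  assumes "i \<in> {1..n}"
  shows "lin_map n M (basis_vec i) = (\<lambda>t. if t \<in> {1..n} then M t i else 0)"
proof
  fix t
  have "(\<Sum>j\<in>{1..n}. M t j * basis_vec i j) = (\<Sum>j\<in>{1..n}. if j = i then M t j else 0)"
    by (intro sum.cong refl) (auto simp: basis_vec_def)
  also have "\<dots> = M t i" using assms by simp
  finally show "lin_map n M (basis_vec i) t = (if t \<in> {1..n} then M t i else 0)"
    by (simp add: lin_map_def)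
qed

lemma mult_basis:
  assumes "i \<in> {1..n}" "j \<in> {1..n}"
  shows "alg_mult n c (basis_vec i) (basis_vec j) = (\<lambda>k. if k \<in> {1..n} then c i j k else 0)"
proof
  fix k
  have inner: "(\<Sum>q\<in>{1..n}. basis_vec i p * basis_vec j q * c p q k) = basis_vec i p * c p j k" for p
  proof -
    have "(\<Sum>q\<in>{1..n}. basis_vec i p * basis_vec j q * c p q k) = (\<Sum>q\<in>{1..n}. if q = j then basis_vec i p * c p q k else 0)"
      by (intro sum.cong refl) (simp add: basis_vec_def)
    also have "\<dots> = basis_vec i p * c p j k" using assms by simp
    finally show ?thesis .
  qed
  have "(\<Sum>p\<in>{1..n}. \<Sum>q\<in>{1..n}. basis_vec i p * basis_vec j q * c p q k)
      = (\<Sum>p\<in>{1..n}. if p = i then c p j k else 0)"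
    unfolding inner by (intro sum.cong refl) (simp add: basis_vec_def)
  also have "\<dots> = c i j k" using assms by simp
  finally show "alg_mult n c (basis_vec i) (basis_vec j) k = (if k \<in> {1..n} then c i j k else 0)"
    by (simp add: alg_mult_def)
qed

lemma autE:
  assumes aut: "is_automorphism n c M" and ijt: "i\<in>{1..n}" "j\<in>{1..n}" "t\<in>{1..n}"
  shows "(\<Sum>k\<in>{1..n}. M t k * c i j k) = (\<Sum>p\<in>{1..n}. \<Sum>q\<in>{1..n}. M p i * M q j * c p q t)"
proof -
  have "lin_map n M (alg_mult n c (basis_vec i) (basis_vec j)) t
      = alg_mult n c (lin_map n M (basis_vec i)) (lin_map n M (basis_vec j)) t"
    using aut basis_vecs[OF ijt(1)] basis_vecs[OF ijt(2)] unfolding is_automorphism_def by auto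
  moreover have "lin_map n M (alg_mult n c (basis_vec i) (basis_vec j)) t = (\<Sum>k\<in>{1..n}. M t k * c i j k)"
    using ijt by (simp add: mult_basis lin_map_def)
  moreover have "alg_mult n c (lin_map n M (basis_vec i)) (lin_map n M (basis_vec j)) t
      = (\<Sum>p\<in>{1..n}. \<Sum>q\<in>{1..n}. M p i * M q j * c p q t)"
    using ijt by (simp add: lin_basis alg_mult_def)
  ultimately show ?thesis by simp
qed

lemma forward:
  assumes n7: "7 \<le> n" and Th: "in_T_hat n c" and aut: "is_automorphism n c M"
  shows "\<exists>\<alpha> \<beta> :: complex. \<forall>i\<in>{1..n}. \<forall>j\<in>{1..n}.
       M i j = (if i = j then 1
                else if i = n \<and> j = 1 then \<alpha>
                else if i = n \<and> j = 2 then \<beta> else 0)"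
proof -
  interpret algs n c M
  proof
    show "7 \<le> n" by fact
    show "\<And>i j k. i\<in>{1..n} \<Longrightarrow> j\<in>{1..n} \<Longrightarrow> k\<in>{1..n} \<Longrightarrow> c i j k = - c j i k"
      using Th unfolding in_T_hat_def in_T'_def by blast
    show "\<And>i j k. i\<in>{1..n} \<Longrightarrow> j\<in>{1..n} \<Longrightarrow> k\<in>{1..n} \<Longrightarrow> k \<le> max i j \<Longrightarrow> c i j k = 0"
      using Th unfolding in_T_hat_def in_T'_def by blast
    show "\<And>i k. 1 \<le> i \<Longrightarrow> i \<le> n-2 \<Longrightarrow> k\<in>{1..n} \<Longrightarrow> c i (i+1) k = (if k = i+2 then 1 else 0)"
      using Th unfolding in_T_hat_def in_T'_def by blast
    show "\<And>i j t. i\<in>{1..n} \<Longrightarrow> j\<in>{1..n} \<Longrightarrow> t\<in>{1..n} \<Longrightarrow>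
     (\<Sum>k\<in>{1..n}. M t k * c i j k) = (\<Sum>p\<in>{1..n}. \<Sum>q\<in>{1..n}. M p i * M q j * c p q t)"
      using autE[OF aut] by blast
  qed
  have dn: "M n n \<noteq> 0"
  proof
    assume z: "M n n = 0"
    have "lin_map n M (basis_vec n) = (\<lambda>t. if t \<in> {1..n} then M t n else 0)"
      using n7 by (intro lin_basis) auto
    also have "\<dots> = (\<lambda>_. 0)"
    proof
      fix t show "(if t \<in> {1..n} then M t n else 0) = 0"
      proof (cases "t \<in> {1..n} \<and> t < n")
        case True thus ?thesis using T[of n t] n7 by auto
      next
        case False thus ?thesis using z by auto
      qed
    qed
    also have "\<dots> = lin_map n M (\<lambda>_. 0)" by (simp add: lin_map_def fun_eq_iff)
    finally have eq: "lin_map n M (basis_vec n) = lin_map n M (\<lambda>_. 0)" .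
    have inj: "inj_on (lin_map n M) (vecs n)" using aut unfolding is_automorphism_def bij_betw_def by auto
    have "basis_vec n = (\<lambda>_. 0)"
    proof (rule inj_onD[OF inj])
      show "lin_map n M (basis_vec n) = lin_map n M (\<lambda>_. 0)" by (rule eq)
      show "basis_vec n \<in> vecs n" using basis_vecs[of n n] n7 by auto
      show "(\<lambda>_. 0) \<in> vecs n" by (simp add: vecs_def)
    qed
    hence "basis_vec n n = 0" by simp
    thus False by (simp add: basis_vec_def)
  qed
  have h: "c 1 3 4 = 0" "c 1 4 5 = 0" "c 1 5 6 = 0" "c 2 4 5 = 0" "c 2 5 6 = 0"
     "c 1 4 6 = 0" "c 2 4 6 = 0" "c 1 3 6 = 0" "c 3 5 6 = 1" "c 1 3 5 \<noteq> 0" "c 4 6 7 \<noteq> 0"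
    using Th unfolding in_T_hat_def by auto
  show ?thesis using Hind[OF dn h] by blast
qed


lemma backward:
  fixes \<alpha> \<beta> :: complex
  assumes n3: "3 \<le> n"
    and anti: "\<And>i j k. i\<in>{1..n} \<Longrightarrow> j\<in>{1..n} \<Longrightarrow> k\<in>{1..n} \<Longrightarrow> c i j k = - c j i k"
    and low: "\<And>i j k. i\<in>{1..n} \<Longrightarrow> j\<in>{1..n} \<Longrightarrow> k\<in>{1..n} \<Longrightarrow> k \<le> max i j \<Longrightarrow> c i j k = 0"
    and form: "\<forall>i\<in>{1..n}. \<forall>j\<in>{1..n}. M i j = (if i = j then 1 else if i = n \<and> j = 1 then \<alpha>
                else if i = n \<and> j = 2 then \<beta> else 0)"
  shows "is_automorphism n c M"
proof -
  define f where "f = (\<lambda>x::nat\<Rightarrow>complex. \<lambda>i. if i \<in> {1..n} then x i + (if i = n then \<alpha> * x 1 + \<beta> * x 2 else 0) else 0)"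
  define g where "g = (\<lambda>x::nat\<Rightarrow>complex. \<lambda>i. if i \<in> {1..n} then x i - (if i = n then \<alpha> * x 1 + \<beta> * x 2 else 0) else 0)"
  have lf: "lin_map n M x = f x" for x
  proof
    fix i
    show "lin_map n M x i = f x i"
    proof (cases "i \<in> {1..n}")
      case False thus ?thesis unfolding lin_map_def f_def by (simp only: if_False if_not_P)
    next
      case iR: True
      show ?thesis
      proof (cases "i = n")
        case False
        have "(\<Sum>j\<in>{1..n}. M i j * x j) = (\<Sum>j\<in>{1..n}. if j = i then x j else 0)"
          using form iR False by (intro sum.cong refl) auto
        also have "\<dots> = x i" using iR by simp
        finally show ?thesis using iR False by (simp add: lin_map_def f_def)
      next
        case True
        have "(\<Sum>j\<in>{1..n}. M i j * x j) = (\<Sum>j\<in>{1..n}. (if j = n then x j else 0) + (if j = 1 then \<alpha> * x j else 0) + (if j = 2 then \<beta> * x j else 0))"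
          using form iR True n3 by (intro sum.cong refl) auto
        also have "\<dots> = x n + \<alpha> * x 1 + \<beta> * x 2" using n3 by (simp add: sum.distrib)
        finally show ?thesis using iR True by (simp add: lin_map_def f_def add.assoc)
      qed
    qed
  qed
  have fv: "f x \<in> vecs n" for x by (simp add: f_def vecs_def)
  have gv: "g x \<in> vecs n" for x by (simp add: g_def vecs_def)
  have n12: "(1::nat) \<in> {1..n}" "(2::nat) \<in> {1..n}" "(1::nat) \<noteq> n" "(2::nat) \<noteq> n" using n3 by auto
  have gf: "g (f x) = x" if "x \<in> vecs n" for x
    using that n12 unfolding f_def g_def vecs_def by (auto simp: fun_eq_iff)
  have fg: "f (g x) = x" if "x \<in> vecs n" for x
    using that n12 unfolding f_def g_def vecs_def by (auto simp: fun_eq_iff)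
  have bij: "bij_betw (lin_map n M) (vecs n) (vecs n)"
  proof (rule bij_betw_byWitness[where f'=g])
    show "\<forall>a\<in>vecs n. g (lin_map n M a) = a" using gf lf by simp
    show "\<forall>a\<in>vecs n. lin_map n M (g a) = a" using fg lf by simp
    show "lin_map n M ` vecs n \<subseteq> vecs n" using fv lf by auto
    show "g ` vecs n \<subseteq> vecs n" using gv by auto
  qed
  have mf: "alg_mult n c (f x) (f y) = alg_mult n c x y" for x y
  proof
    fix k
    show "alg_mult n c (f x) (f y) k = alg_mult n c x y k"
    proof (cases "k \<in> {1..n}")
      case False thus ?thesis unfolding alg_mult_def by (simp only: if_False if_not_P)
    next
      case kR: True
      have "(\<Sum>p\<in>{1..n}. \<Sum>q\<in>{1..n}. f x p * f y q * c p q k) = (\<Sum>p\<in>{1..n}. \<Sum>q\<in>{1..n}. x p * y q * c p q k)"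
      proof (intro sum.cong refl)
        fix p q assume pq: "p \<in> {1..n}" "q \<in> {1..n}"
        show "f x p * f y q * c p q k = x p * y q * c p q k"
        proof (cases "p = n \<or> q = n")
          case True hence "c p q k = 0" using low[of p q k] pq kR by auto
          thus ?thesis by simp
        next
          case False thus ?thesis using pq by (simp add: f_def)
        qed
      qed
      thus ?thesis using kR by (simp add: alg_mult_def)
    qed
  qed
  have c12: "c p q 1 = 0 \<and> c p q 2 = 0" if "p \<in> {1..n}" "q \<in> {1..n}" for p q
  proof (cases "max p q \<ge> 2")
    case True thus ?thesis using low[of p q 1] low[of p q 2] that n12 by auto
  next
    case False hence "p = 1" "q = 1" using that by auto
    thus ?thesis using anti[of 1 1 2] low[of 1 1 1] n12 by auto
  qed
  have ff: "f (alg_mult n c x y) = alg_mult n c x y" for x y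
  proof -
    have z: "alg_mult n c x y 1 = 0" "alg_mult n c x y 2 = 0"
      using c12 n12 by (auto simp: alg_mult_def intro!: sum.neutral)
    show ?thesis using z unfolding f_def by (auto simp: fun_eq_iff alg_mult_def)
  qed
  show ?thesis unfolding is_automorphism_def
    using bij lf mf ff by simp
qed

theorem mainTheorem18:
  fixes n :: nat and c :: "nat \<Rightarrow> nat \<Rightarrow> nat \<Rightarrow> complex"
  assumes "7 \<le> n" and "in_T_hat n c"
  shows "is_automorphism n c M \<longleftrightarrow>
    (\<exists>\<alpha> \<beta> :: complex. \<forall>i\<in>{1..n}. \<forall>j\<in>{1..n}.
       M i j = (if i = j then 1
                else if i = n \<and> j = 1 then \<alpha>
                else if i = n \<and> j = 2 then \<beta> else 0))"
proof
  assume "is_automorphism n c M"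
  thus "\<exists>\<alpha> \<beta> :: complex. \<forall>i\<in>{1..n}. \<forall>j\<in>{1..n}.
       M i j = (if i = j then 1 else if i = n \<and> j = 1 then \<alpha> else if i = n \<and> j = 2 then \<beta> else 0)"
    using forward assms by blast
next
  assume "\<exists>\<alpha> \<beta> :: complex. \<forall>i\<in>{1..n}. \<forall>j\<in>{1..n}.
       M i j = (if i = j then 1 else if i = n \<and> j = 1 then \<alpha> else if i = n \<and> j = 2 then \<beta> else 0)"
  then obtain \<alpha> \<beta> :: complex where form: "\<forall>i\<in>{1..n}. \<forall>j\<in>{1..n}.
       M i j = (if i = j then 1 else if i = n \<and> j = 1 then \<alpha> else if i = n \<and> j = 2 then \<beta> else 0)"
    by blast
  show "is_automorphism n c M"
  proof (rule backward[OF _ _ _ form])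
    show "3 \<le> n" using assms by simp
    show "\<And>i j k. i\<in>{1..n} \<Longrightarrow> j\<in>{1..n} \<Longrightarrow> k\<in>{1..n} \<Longrightarrow> c i j k = - c j i k"
      using assms(2) unfolding in_T_hat_def in_T'_def by blast
    show "\<And>i j k. i\<in>{1..n} \<Longrightarrow> j\<in>{1..n} \<Longrightarrow> k\<in>{1..n} \<Longrightarrow> k \<le> max i j \<Longrightarrow> c i j k = 0"
      using assms(2) unfolding in_T_hat_def in_T'_def by blast
  qed
qed

end
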